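(* Consider the PSSG described in the context in the FULL-FULL scenario: $k_1\mu_1>2L\lambda$ and $k_2\mu_2>2L\lambda$. Define $$\theta^L_2=-\frac{k_q q_1(2L)+k_l(x_2-x_1)}{k_p d},\qquad \theta^R_2=\frac{k_q q_2(2L)+k_l(x_2-x_1)}{k_p d}.$$ If $p_1-p_2\in[\theta^R_2,\,p_{\max}-p_{\min}]$, then at the Nash equilibrium of the PSSG every PEV selects station 2. If $p_1-p_2\in[p_{\min}-p_{\max},\,\theta^L_2]$, then at the Nash equilibrium of the PSSG every PEV selects station 1.
   Context: The system is the segment $[-L,L]$ ($L>0$) with two charging stations located at $x_1<x_2$, $-L<x_1<x_2<L$. Station $i\in\{1,2\}$ has $k_i\ge 1$ (integer) identical charging ports, PEV service times with mean $1/\mu_i$ ($\mu_i>0$) and variance $\sigma_i^2$, and announces a price $p_i\in[p_{\min},p_{\max}]$. A continuum of PEVs is uniformly distributed on $[-L,L]$, generating charging requests at rate $\lambda>0$ per unit length. Each PEV at location $x$ selects station 1 or 2, possibly at random; a strategy profile is described by the probability $\omega(x)\in[0,1]$ that the PEV at $x$ selects station 1. Let $a_1=\int_{-L}^{L}\omega(x)\,dx$ and $a_2=2L-a_1$. For $0\le a<k_i\mu_i/\lambda$, $$q_i(a)=\frac{a\lambda\,(\sigma_i^2+\frac{1}{\mu_i^2})\,\rho^{k_i-1}}{2(k_i-1)!\,(k_i-\rho)^2\Big[\sum_{m=0}^{k_i-1}\frac{\rho^m}{m!}+\frac{\rho^{k_i}}{(k_i-1)!(k_i-\rho)}\Big]},\qquad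 \rho=\frac{a\lambda}{\mu_i},$$ is the mean waiting time at station $i$, and $q_i(a)=+\infty$ if $a\ge k_i\mu_i/\lambda$. Given $a_1,a_2$ (which a single PEV cannot change), a PEV at $x$ selecting station $i$ gets payoff $U(i;x)=-k_l|x-x_i|-k_q\,q_i(a_i)-k_p\,d\,p_i$, with constants $k_l,k_q,k_p,d>0$; a randomized choice yields the expected payoff. A Nash equilibrium of the PSSG is a profile in which every PEV's (possibly mixed) choice maximizes its expected payoff given $a_1,a_2$. *)

theory Defs
  imports "HOL-Analysis.Analysis"
begin

text \<open>Mean waiting time formula at a station with k ports, service rate mu,
  service-time variance s2, request rate lam per unit length, attraction length a
  (only meaningful for a < k*mu/lam).\<close>
definition qform :: "nat \<Rightarrow> real \<Rightarrow> real \<Rightarrow> real \<Rightarrow> real \<Rightarrow> real" where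
  "qform k mu s2 lam a =
     (let rho = a * lam / mu in
      a * lam * (s2 + 1 / mu^2) * rho ^ (k - 1) /
      (2 * fact (k - 1) * (real k - rho)^2 *
        ((\<Sum>m<k. rho ^ m / fact m) + rho ^ k / (fact (k - 1) * (real k - rho)))))"

definition qwait :: "nat \<Rightarrow> real \<Rightarrow> real \<Rightarrow> real \<Rightarrow> real \<Rightarrow> ereal" where
  "qwait k mu s2 lam a = (if a < real k * mu / lam then ereal (qform k mu s2 lam a) else \<infinity>)"

definition payoff :: "real \<Rightarrow> real \<Rightarrow> real \<Rightarrow> real \<Rightarrow> real \<Rightarrow> ereal \<Rightarrow> real \<Rightarrow> real \<Rightarrow> ereal" where
  "payoff kl kq kp d xi qi pri x = ereal (- kl * \<bar>x - xi\<bar> - kp * d * pri) - ereal kq * qi"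

text \<open>Nash equilibrium of the PSSG: omega x is the probability that the PEV at x
  selects station 1; every PEV's mixed choice maximizes its expected payoff given a1, a2.\<close>
definition is_NE ::
  "real \<Rightarrow> real \<Rightarrow> real \<Rightarrow> real \<Rightarrow>
   nat \<Rightarrow> real \<Rightarrow> real \<Rightarrow> real \<Rightarrow>
   nat \<Rightarrow> real \<Rightarrow> real \<Rightarrow> real \<Rightarrow>
   real \<Rightarrow> real \<Rightarrow> real \<Rightarrow> real \<Rightarrow> (real \<Rightarrow> real) \<Rightarrow> bool" where
  "is_NE L lam x1 x2 k1 mu1 s1 p1 k2 mu2 s2 p2 kl kq kp d \<omega> \<longleftrightarrow>
     set_integrable lborel {-L..L} \<omega> \<and>
     (let a1 = (LINT x:{-L..L}|lborel. \<omega> x);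
          a2 = 2 * L - a1;
          Q1 = qwait k1 mu1 s1 lam a1;
          Q2 = qwait k2 mu2 s2 lam a2
      in \<forall>x\<in>{-L..L}. 0 \<le> \<omega> x \<and> \<omega> x \<le> 1 \<and>
           (let U1 = payoff kl kq kp d x1 Q1 p1 x;
                U2 = payoff kl kq kp d x2 Q2 p2 x
            in \<forall>w\<in>{0..1::real}.
                 ereal w * U1 + ereal (1 - w) * U2 \<le> ereal (\<omega> x) * U1 + ereal (1 - \<omega> x) * U2))"

end

theory Submission imports Defs begin

definition gq :: "nat \<Rightarrow> real \<Rightarrow> real" where
  "gq k r = (real k - r) * (fact (k-1) * (\<Sum>m<k. (real k - r) / (fact m * r ^ (k - m))) + 1)"

lemma qform_alt:
  assumes k: "k \<ge> 1" and mu: "mu > 0" and lam: "lam > 0" and a: "a > 0" and lt: "a * lam < real k * mu"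
  shows "qform k mu s2 lam a = mu * (s2 + 1/mu^2) / (2 * gq k (a*lam/mu))"
proof -
  define r where "r = a*lam/mu"
  have r0: "r > 0" using a lam mu by (simp add: r_def)
  have rk: "r < real k" using lt mu by (simp add: r_def field_simps)
  have alr: "a * lam = mu * r" using mu by (simp add: r_def)
  define S where "S = (\<Sum>m<k. r ^ m / fact m)"
  have sumeq: "(\<Sum>m<k. (real k - r) / (fact m * r ^ (k - m))) = (real k - r) * S / r ^ k"
    unfolding S_def sum_distrib_left sum_divide_distrib
  proof (rule sum.cong)
    fix m assume "m \<in> {..<k}"
    then have "m < k" by simp
    then have "r ^ k = r ^ m * r ^ (k - m)" by (simp add: power_add[symmetric])
    then show "(real k - r) / (fact m * r ^ (k - m)) = (real k - r) * (r ^ m / fact m) / r ^ k"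
      using r0 by (simp add: field_simps)
  qed simp
  have km1: "r ^ (k - 1) * r = r ^ k" using k by (metis One_nat_def Suc_pred' less_le_trans power_Suc2 zero_less_one)
  have rkpos: "r ^ k > 0" using r0 by simp
  have f: "fact (k-1) > (0::real)" by simp
  have S0: "S \<ge> 0" unfolding S_def using r0 by (intro sum_nonneg) simp
  have kr: "real k - r > 0" using rk by simp
  have "qform k mu s2 lam a = mu * r * (s2 + 1/mu^2) * r^(k-1) /
      (2 * fact (k-1) * (real k - r)^2 * (S + r^k / (fact (k-1) * (real k - r))))"
    unfolding qform_def Let_def using mu by (simp add: r_def S_def)
  also have "\<dots> = mu * (s2 + 1/mu^2) / (2 * gq k r)"
  proof -
    define F where "F = (fact (k-1) :: real)"
    define D where "D = real k - r"
    define P where "P = r ^ k"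
    define C where "C = mu * (s2 + 1/mu^2)"
    have rk1: "r^(k-1) = P / r" using km1 r0 by (simp add: P_def field_simps)
    have F0: "F > 0" and D0: "D > 0" and P0: "P > 0" using f kr rkpos by (auto simp: F_def D_def P_def)
    have pos: "F * D * S + P > 0" using F0 D0 S0 P0 by (simp add: add_nonneg_pos)
    have pos2: "D * (P * 2) + D * (D * (F * (S * 2))) > 0" using pos D0 F0 S0 P0
      by (simp add: add_pos_nonneg)
    have pos3: "D * (D * (F * (P * 2))) + D * (D * (D * (F * (F * (S * 2))))) > 0" using pos D0 F0 S0 P0
      by (simp add: add_pos_nonneg)
    have "mu * r * (s2 + 1/mu^2) * r^(k-1) /
      (2 * fact (k-1) * (real k - r)^2 * (S + r^k / (fact (k-1) * (real k - r))))
      = C * P / (2 * D * (F * D * S + P))"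
      unfolding F_def[symmetric] D_def[symmetric] P_def[symmetric] rk1
        mult.assoc[of mu r] mult.commute[of r] mult.assoc[symmetric] C_def[symmetric]
      using F0 D0 P0 r0 pos pos2 pos3 by (simp add: field_simps power2_eq_square)
    also have "\<dots> = C / (2 * gq k r)"
      unfolding gq_def sumeq unfolding F_def[symmetric] D_def[symmetric] P_def[symmetric]
      using F0 D0 P0 r0 pos by (simp add: field_simps)
    finally show ?thesis by (simp add: C_def)
  qed
  finally show ?thesis by (simp add: r_def)
qed

lemma gq_pos: assumes "0 < r" "r < real k" shows "gq k r > 0"
  unfolding gq_def using assms
  by (intro mult_pos_pos add_nonneg_pos mult_nonneg_nonneg sum_nonneg) auto

lemma gq_antimono: assumes "0 < r" "r \<le> r'" "r' < real k" shows "gq k r' \<le> gq k r"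
  unfolding gq_def
proof (rule mult_mono)
  show "real k - r' \<le> real k - r" using assms by simp
  show "fact (k - 1) * (\<Sum>m<k. (real k - r') / (fact m * r' ^ (k - m))) + 1
      \<le> fact (k - 1) * (\<Sum>m<k. (real k - r) / (fact m * r ^ (k - m))) + 1"
  proof -
    have "(\<Sum>m<k. (real k - r') / (fact m * r' ^ (k - m))) \<le> (\<Sum>m<k. (real k - r) / (fact m * r ^ (k - m)))"
    proof (rule sum_mono)
      fix m assume "m \<in> {..<k}"
      have "r ^ (k-m) \<le> r' ^ (k-m)" using assms by (intro power_mono) auto
      then have "fact m * r ^ (k - m) \<le> fact m * r' ^ (k - m)" by (intro mult_left_mono) auto
      then show "(real k - r') / (fact m * r' ^ (k - m)) \<le> (real k - r) / (fact m * r ^ (k - m))"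
        using assms by (intro frac_le) auto
    qed
    then show ?thesis by (intro add_right_mono mult_left_mono) auto
  qed
  show "0 \<le> real k - r" using assms by simp
  show "0 \<le> fact (k - 1) * (\<Sum>m<k. (real k - r') / (fact m * r' ^ (k - m))) + 1"
    using assms by (intro add_nonneg_nonneg mult_nonneg_nonneg sum_nonneg) auto
qed

lemma qform_pos:
  assumes "k \<ge> 1" "mu > 0" "lam > 0" "a > 0" "a * lam < real k * mu" "s2 \<ge> 0"
  shows "qform k mu s2 lam a > 0"
proof -
  have "a*lam/mu < real k" using assms by (simp add: field_simps)
  then have "gq k (a*lam/mu) > 0" using assms by (intro gq_pos) auto
  then show ?thesis using assms qform_alt[of k mu lam a s2] by (simp add: add_nonneg_pos)
qed

lemma qform_zero: "qform k mu s2 lam 0 = 0" by (simp add: qform_def)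

lemma qform_mono:
  assumes "k \<ge> 1" "mu > 0" "lam > 0" "0 \<le> a" "a \<le> b" "b * lam < real k * mu" "s2 \<ge> 0"
  shows "qform k mu s2 lam a \<le> qform k mu s2 lam b"
proof (cases "a = 0")
  case True
  have "b * lam \<le> b * lam" by simp
  show ?thesis
  proof (cases "b = 0")
    case False
    then have "qform k mu s2 lam b > 0" using assms by (intro qform_pos) auto
    then show ?thesis using True by (simp add: qform_zero)
  qed (use True in simp)
next
  case False
  then have a0: "a > 0" using assms by simp
  have bk: "b*lam/mu < real k" using assms by (simp add: field_simps)
  have ab: "a*lam/mu \<le> b*lam/mu" using assms by (simp add: divide_right_mono)
  have p1: "gq k (a*lam/mu) > 0" using a0 assms ab bk by (intro gq_pos) auto
  have p2: "gq k (b*lam/mu) > 0" using a0 assms ab bk by (intro gq_pos) auto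
  have le: "gq k (b*lam/mu) \<le> gq k (a*lam/mu)" using a0 assms ab bk by (intro gq_antimono) auto
  have c: "mu * (s2 + 1/mu^2) > 0" using assms by (simp add: add_nonneg_pos)
  have "mu * (s2 + 1/mu^2) / (2 * gq k (a*lam/mu)) \<le> mu * (s2 + 1/mu^2) / (2 * gq k (b*lam/mu))"
    using c p1 p2 le by (intro divide_left_mono) auto
  moreover have "a * lam \<le> b * lam" using assms by (intro mult_right_mono) auto
  then have "a * lam < real k * mu" using assms by linarith
  ultimately show ?thesis using assms a0 qform_alt[of k mu lam a s2] qform_alt[of k mu lam b s2]
    by simp
qed

lemma int_facts:
  fixes \<omega> :: "real \<Rightarrow> real"
  assumes L: "L > 0" and si: "set_integrable lborel {-L..L} \<omega>"
    and b: "\<forall>x\<in>{-L..L}. 0 \<le> \<omega> x \<and> \<omega> x \<le> 1"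
  defines "a1 \<equiv> (LINT x:{-L..L}|lborel. \<omega> x)"
  shows "0 \<le> a1" "a1 \<le> 2 * L"
    "a1 = 0 \<Longrightarrow> AE x in lborel. x \<in> {-L..L} \<longrightarrow> \<omega> x = 0"
    "a1 = 2 * L \<Longrightarrow> AE x in lborel. x \<in> {-L..L} \<longrightarrow> \<omega> x = 1"
    "(\<forall>x\<in>{-L..L}. \<omega> x = 0) \<Longrightarrow> a1 = 0"
    "(\<forall>x\<in>{-L..L}. \<omega> x = 1) \<Longrightarrow> a1 = 2 * L"
proof -
  let ?S = "{-L..L::real}"
  define f where "f x = indicator ?S x * \<omega> x" for x
  have fi: "integrable lborel f" using si unfolding set_integrable_def f_def by simp
  have a1f: "a1 = integral\<^sup>L lborel f" unfolding a1_def set_lebesgue_integral_def f_def by simp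
  have ii: "integrable lborel (indicator ?S :: real \<Rightarrow> real)" using L by (intro integrable_real_indicator) (auto simp: emeasure_lborel_Icc)
  have mS: "integral\<^sup>L lborel (indicator ?S :: real \<Rightarrow> real) = 2 * L" using L by simp
  have f0: "0 \<le> f x" for x using b by (auto simp: f_def indicator_def)
  have f1: "f x \<le> indicator ?S x" for x using b by (auto simp: f_def indicator_def)
  show "0 \<le> a1" unfolding a1f by (rule integral_nonneg_AE) (simp add: f0)
  show "a1 \<le> 2 * L" unfolding a1f mS[symmetric] by (rule integral_mono[OF fi ii]) (simp add: f1)
  show "a1 = 0 \<Longrightarrow> AE x in lborel. x \<in> ?S \<longrightarrow> \<omega> x = 0"
  proof -
    assume "a1 = 0"
    then have "AE x in lborel. f x = 0" using integral_nonneg_eq_0_iff_AE[OF fi] f0 a1f by simp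
    then show ?thesis by eventually_elim (auto simp: f_def)
  qed
  show "a1 = 2 * L \<Longrightarrow> AE x in lborel. x \<in> ?S \<longrightarrow> \<omega> x = 1"
  proof -
    assume h: "a1 = 2 * L"
    define g where "g x = indicator ?S x - f x" for x
    have gi: "integrable lborel g" unfolding g_def using fi ii by simp
    have "integral\<^sup>L lborel g = 0" unfolding g_def using fi ii mS h a1f by simp
    then have "AE x in lborel. g x = 0" using integral_nonneg_eq_0_iff_AE[OF gi] f1
      by (simp add: g_def)
    then show ?thesis by eventually_elim (auto simp: g_def f_def)
  qed
  show "(\<forall>x\<in>?S. \<omega> x = 0) \<Longrightarrow> a1 = 0"
  proof -
    assume "\<forall>x\<in>?S. \<omega> x = 0"
    then have "f = (\<lambda>x. 0)" by (auto simp: f_def indicator_def)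
    then show ?thesis using a1f by simp
  qed
  show "(\<forall>x\<in>?S. \<omega> x = 1) \<Longrightarrow> a1 = 2 * L"
  proof -
    assume "\<forall>x\<in>?S. \<omega> x = 1"
    then have "f = indicator ?S" by (auto simp: f_def indicator_def)
    then show ?thesis using a1f mS by simp
  qed
qed

lemma ne_point:
  fixes u1 u2 om :: real
  assumes "\<forall>w\<in>{0..1::real}. ereal w * ereal u1 + ereal (1 - w) * ereal u2
             \<le> ereal om * ereal u1 + ereal (1 - om) * ereal u2"
  shows "u1 < u2 \<Longrightarrow> om \<le> 0" "u2 < u1 \<Longrightarrow> 1 \<le> om"
proof -
  have h0: "u2 \<le> om * u1 + (1 - om) * u2" using assms[rule_format, of 0] by simp
  have h1: "u1 \<le> om * u1 + (1 - om) * u2" using assms[rule_format, of 1] by simp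
  show "u1 < u2 \<Longrightarrow> om \<le> 0"
  proof -
    assume "u1 < u2"
    moreover have "0 \<le> om * (u1 - u2)" using h0 by (simp add: algebra_simps)
    ultimately show ?thesis by (simp add: zero_le_mult_iff)
  qed
  show "u2 < u1 \<Longrightarrow> 1 \<le> om"
  proof -
    assume "u2 < u1"
    moreover have "0 \<le> (1 - om) * (u2 - u1)" using h1 by (simp add: algebra_simps)
    ultimately show ?thesis by (simp add: zero_le_mult_iff)
  qed
qed

lemma payoff_fin: "payoff kl kq kp d xi (ereal q) pr x = ereal (- kl * \<bar>x - xi\<bar> - kp * d * pr - kq * q)"
  unfolding payoff_def by simp

theorem theorem3:
  fixes L lam x1 x2 mu1 mu2 s1 s2 p1 p2 pmin pmax kl kq kp d :: real
    and k1 k2 :: nat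
  assumes "L > 0" and "-L < x1" and "x1 < x2" and "x2 < L"
    and "k1 \<ge> 1" and "k2 \<ge> 1" and "mu1 > 0" and "mu2 > 0"
    and "s1 \<ge> 0" and "s2 \<ge> 0" and "lam > 0"
    and "kl > 0" and "kq > 0" and "kp > 0" and "d > 0"
    and "p1 \<in> {pmin..pmax}" and "p2 \<in> {pmin..pmax}"
    and full1: "real k1 * mu1 > 2 * L * lam" and full2: "real k2 * mu2 > 2 * L * lam"
  shows
    "(p1 - p2 \<in> {(kq * qform k2 mu2 s2 lam (2 * L) + kl * (x2 - x1)) / (kp * d) .. pmax - pmin} \<longrightarrow>
        (\<forall>\<omega>. is_NE L lam x1 x2 k1 mu1 s1 p1 k2 mu2 s2 p2 kl kq kp d \<omega> \<longrightarrow>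
              (AE x in lborel. x \<in> {-L..L} \<longrightarrow> \<omega> x = 0)))
     \<and>
     (p1 - p2 \<in> {pmin - pmax .. - (kq * qform k1 mu1 s1 lam (2 * L) + kl * (x2 - x1)) / (kp * d)} \<longrightarrow>
        (\<forall>\<omega>. is_NE L lam x1 x2 k1 mu1 s1 p1 k2 mu2 s2 p2 kl kq kp d \<omega> \<longrightarrow>
              (AE x in lborel. x \<in> {-L..L} \<longrightarrow> \<omega> x = 1)))"
proof -
  note A = assms
  have kpd: "kp * d > 0" using A by simp
  {
    fix \<omega> :: "real \<Rightarrow> real"
    assume ne: "is_NE L lam x1 x2 k1 mu1 s1 p1 k2 mu2 s2 p2 kl kq kp d \<omega>"
    define a1 where "a1 = (LINT x:{-L..L}|lborel. \<omega> x)"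
    define a2 where "a2 = 2 * L - a1"
    have si: "set_integrable lborel {-L..L} \<omega>" using ne unfolding is_NE_def by simp
    have all: "\<forall>x\<in>{-L..L}. 0 \<le> \<omega> x \<and> \<omega> x \<le> 1 \<and>
        (\<forall>w\<in>{0..1::real}.
          ereal w * payoff kl kq kp d x1 (qwait k1 mu1 s1 lam a1) p1 x
          + ereal (1 - w) * payoff kl kq kp d x2 (qwait k2 mu2 s2 lam a2) p2 x
          \<le> ereal (\<omega> x) * payoff kl kq kp d x1 (qwait k1 mu1 s1 lam a1) p1 x
          + ereal (1 - \<omega> x) * payoff kl kq kp d x2 (qwait k2 mu2 s2 lam a2) p2 x)"
      using ne unfolding is_NE_def Let_def a1_def a2_def by simp
    have b: "\<forall>x\<in>{-L..L}. 0 \<le> \<omega> x \<and> \<omega> x \<le> 1" using all by simp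
    note F = int_facts[OF A(1) si b, folded a1_def]
    have a1r: "0 \<le> a1" "a1 \<le> 2 * L" using F(1,2) by auto
    have a2r: "0 \<le> a2" "a2 \<le> 2 * L" using a1r by (auto simp: a2_def)
    have "a1 * lam \<le> 2 * L * lam" using a1r A(11) by (intro mult_right_mono) auto
    then have l1: "a1 * lam < real k1 * mu1" using full1 by linarith
    have "a2 * lam \<le> 2 * L * lam" using a2r A(11) by (intro mult_right_mono) auto
    then have l2: "a2 * lam < real k2 * mu2" using full2 by linarith
    have Q1: "qwait k1 mu1 s1 lam a1 = ereal (qform k1 mu1 s1 lam a1)"
      using l1 A(11) by (simp add: qwait_def pos_less_divide_eq)
    have Q2: "qwait k2 mu2 s2 lam a2 = ereal (qform k2 mu2 s2 lam a2)"
      using l2 A(11) by (simp add: qwait_def pos_less_divide_eq)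
    define q1 where "q1 = qform k1 mu1 s1 lam a1"
    define q2 where "q2 = qform k2 mu2 s2 lam a2"
    have pt: "\<forall>x\<in>{-L..L}. \<forall>w\<in>{0..1::real}.
          ereal w * ereal (- kl * \<bar>x - x1\<bar> - kp * d * p1 - kq * q1)
          + ereal (1 - w) * ereal (- kl * \<bar>x - x2\<bar> - kp * d * p2 - kq * q2)
          \<le> ereal (\<omega> x) * ereal (- kl * \<bar>x - x1\<bar> - kp * d * p1 - kq * q1)
          + ereal (1 - \<omega> x) * ereal (- kl * \<bar>x - x2\<bar> - kp * d * p2 - kq * q2)"
      using all unfolding Q1 Q2 payoff_fin q1_def q2_def by blast
    have P: "x \<in> {-L..L} \<Longrightarrow> - kl * \<bar>x - x1\<bar> - kp * d * p1 - kq * q1 < - kl * \<bar>x - x2\<bar> - kp * d * p2 - kq * q2 \<Longrightarrow> \<omega> x \<le> 0"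
      "x \<in> {-L..L} \<Longrightarrow> - kl * \<bar>x - x2\<bar> - kp * d * p2 - kq * q2 < - kl * \<bar>x - x1\<bar> - kp * d * p1 - kq * q1 \<Longrightarrow> 1 \<le> \<omega> x" for x
      using ne_point[OF bspec[OF pt]] by blast+
    have tri1: "kl * \<bar>x - x2\<bar> \<le> kl * \<bar>x - x1\<bar> + kl * (x2 - x1)" for x
    proof -
      have "\<bar>x - x2\<bar> \<le> \<bar>x - x1\<bar> + (x2 - x1)" using A(3) by linarith
      then show ?thesis using A(12) by (simp add: distrib_left[symmetric])
    qed
    have tri2: "kl * \<bar>x - x1\<bar> \<le> kl * \<bar>x - x2\<bar> + kl * (x2 - x1)" for x
    proof -
      have "\<bar>x - x1\<bar> \<le> \<bar>x - x2\<bar> + (x2 - x1)" using A(3) by linarith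
      then show ?thesis using A(12) by (simp add: distrib_left[symmetric])
    qed
    have fl: "2 * L * lam < real k1 * mu1" "2 * L * lam < real k2 * mu2" using full1 full2 by auto
    have part1: "AE x in lborel. x \<in> {-L..L} \<longrightarrow> \<omega> x = 0"
      if th: "(kq * qform k2 mu2 s2 lam (2 * L) + kl * (x2 - x1)) / (kp * d) \<le> p1 - p2"
    proof -
      have th': "kq * qform k2 mu2 s2 lam (2 * L) + kl * (x2 - x1) \<le> kp * d * (p1 - p2)"
        using th kpd by (simp add: pos_divide_le_eq mult.commute)
      have "a1 = 0"
      proof (rule ccontr)
        assume "a1 \<noteq> 0"
        then have a1p: "a1 > 0" using a1r by simp
        have q1p: "q1 > 0" unfolding q1_def using A a1p l1 by (intro qform_pos) auto
        have q2m: "q2 \<le> qform k2 mu2 s2 lam (2 * L)" unfolding q2_def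
          using A a2r fl by (intro qform_mono) auto
        have "\<forall>x\<in>{-L..L}. \<omega> x = 0"
        proof
          fix x assume xs: "x \<in> {-L..L}"
          have "kq * q2 \<le> kq * qform k2 mu2 s2 lam (2 * L)" using q2m A(13) by simp
          moreover have "kq * q1 > 0" using q1p A(13) by simp
          ultimately have "- kl * \<bar>x - x1\<bar> - kp * d * p1 - kq * q1 < - kl * \<bar>x - x2\<bar> - kp * d * p2 - kq * q2"
            using tri1[of x] th' by (simp add: algebra_simps)
          then have "\<omega> x \<le> 0" using P(1)[OF xs] by blast
          then show "\<omega> x = 0" using b xs by force
        qed
        then have "a1 = 0" using F(5) by blast
        then show False using a1p by simp
      qed
      then show ?thesis using F(3) by blast
    qed
    have part2: "AE x in lborel. x \<in> {-L..L} \<longrightarrow> \<omega> x = 1"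
      if th: "p1 - p2 \<le> - (kq * qform k1 mu1 s1 lam (2 * L) + kl * (x2 - x1)) / (kp * d)"
    proof -
      have th': "kp * d * (p1 - p2) \<le> - (kq * qform k1 mu1 s1 lam (2 * L) + kl * (x2 - x1))"
        using th kpd by (simp add: pos_le_divide_eq mult.commute)
      have "a2 = 0"
      proof (rule ccontr)
        assume "a2 \<noteq> 0"
        then have a2p: "a2 > 0" using a2r by simp
        have q2p: "q2 > 0" unfolding q2_def using A a2p l2 by (intro qform_pos) auto
        have q1m: "q1 \<le> qform k1 mu1 s1 lam (2 * L)" unfolding q1_def
          using A a1r fl by (intro qform_mono) auto
        have "\<forall>x\<in>{-L..L}. \<omega> x = 1"
        proof
          fix x assume xs: "x \<in> {-L..L}"
          have "kq * q1 \<le> kq * qform k1 mu1 s1 lam (2 * L)" using q1m A(13) by simp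
          moreover have "kq * q2 > 0" using q2p A(13) by simp
          ultimately have "- kl * \<bar>x - x2\<bar> - kp * d * p2 - kq * q2 < - kl * \<bar>x - x1\<bar> - kp * d * p1 - kq * q1"
            using tri2[of x] th' by (simp add: algebra_simps)
          then have "1 \<le> \<omega> x" using P(2)[OF xs] by blast
          then show "\<omega> x = 1" using b xs by force
        qed
        then have "a1 = 2 * L" using F(6) by blast
        then show False using a2p by (simp add: a2_def)
      qed
      then show ?thesis using F(4) by (simp add: a2_def)
    qed
    note part1 part2
  }
  then show ?thesis by auto
qed
end
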